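(* Suppose Assumptions (A1), (A2), (A3) and (LIN) hold, and let $x\in\mathcal{X}$ be such that $y^*(x)$ is a single point. Then for every $i\in\{1,\dots,k\}$, $\displaystyle\lim_{t\to0^+}\frac{t}{-h_i(x,y_t^*(x))}=\lambda_i(x)$.
   Context: Let $f,g,h_1,\dots,h_k:\mathbb{R}^n\times\mathbb{R}^m\to\mathbb{R}$ and $\mathcal{X}\subseteq\mathbb{R}^n$. For $x\in\mathcal{X}$ let $\mathcal{Y}(x)=\{y: h_i(x,y)\le 0,\ i=1,\dots,k\}$ and $y^*(x)=\arg\min_{y\in\mathcal{Y}(x)} g(x,y)$. For $t>0$ let $\widetilde g_t(x,y)=g(x,y)-t\sum_{i=1}^k\log(-h_i(x,y))$ (defined when all $h_i(x,y)<0$) and $y_t^*(x)=\arg\min_y\widetilde g_t(x,y)$. $\lambda_i(x)\ge0$ denotes the optimal KKT multiplier of the $i$-th constraint of the lower-level problem at $y^*(x)$. Assumptions: (A1) $f$ once and $g,h_i$ twice continuously differentiable; (A2) $\mathcal{X}$ convex and compact and for every $x\in\mathcal{X}$ there is $y$ with $h_i(x,y)<0$ for all $i$; (A3) (LICQ) for every $x\in\mathcal{X}$ and $y\in y^*(x)$, $\{\nabla_y h_i(x,y): h_i(x,y)=0\}$ is linearly independent; (LIN) for every $x\in\mathcal{X}$, $g(x,\cdot)$ and all $h_i(x,\cdot)$ are linear (affine) in $y$ and $\mathcal{Y}(x)$ is compact. *)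

theory Defs
  imports "HOL-Analysis.Analysis"
begin

definition C1_fun :: "('a::euclidean_space \<Rightarrow> real) \<Rightarrow> bool" where
  "C1_fun F \<longleftrightarrow> (\<exists>F'. (\<forall>z. (F has_derivative blinfun_apply (F' z)) (at z))
                    \<and> continuous_on UNIV F')"

definition C2_fun :: "('a::euclidean_space \<Rightarrow> real) \<Rightarrow> bool" where
  "C2_fun F \<longleftrightarrow> (\<exists>F' F''. (\<forall>z. (F has_derivative blinfun_apply (F' z)) (at z))
                    \<and> (\<forall>z. (F' has_derivative blinfun_apply (F'' z)) (at z))
                    \<and> continuous_on UNIV F'')"

definition grad_y :: "('n \<Rightarrow> real^'m \<Rightarrow> real) \<Rightarrow> 'n \<Rightarrow> real^'m \<Rightarrow> real^'m" where
  "grad_y F x y = (\<chi> j. frechet_derivative (F x) (at y) (axis j 1))"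

definition feas :: "nat \<Rightarrow> (nat \<Rightarrow> 'n \<Rightarrow> 'y \<Rightarrow> real) \<Rightarrow> 'n \<Rightarrow> 'y set" where
  "feas k h x = {y. \<forall>i\<in>{1..k}. h i x y \<le> 0}"

definition ystar :: "nat \<Rightarrow> ('n \<Rightarrow> 'y \<Rightarrow> real) \<Rightarrow> (nat \<Rightarrow> 'n \<Rightarrow> 'y \<Rightarrow> real) \<Rightarrow> 'n \<Rightarrow> 'y set" where
  "ystar k g h x = {y \<in> feas k h x. \<forall>z\<in>feas k h x. g x y \<le> g x z}"

definition gbar :: "nat \<Rightarrow> ('n \<Rightarrow> 'y \<Rightarrow> real) \<Rightarrow> (nat \<Rightarrow> 'n \<Rightarrow> 'y \<Rightarrow> real) \<Rightarrow> real \<Rightarrow> 'n \<Rightarrow> 'y \<Rightarrow> real" where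
  "gbar k g h t x y = g x y - t * (\<Sum>i=1..k. ln (- h i x y))"

definition sfeas :: "nat \<Rightarrow> (nat \<Rightarrow> 'n \<Rightarrow> 'y \<Rightarrow> real) \<Rightarrow> 'n \<Rightarrow> 'y set" where
  "sfeas k h x = {y. \<forall>i\<in>{1..k}. h i x y < 0}"

definition is_barrier_min :: "nat \<Rightarrow> ('n \<Rightarrow> 'y \<Rightarrow> real) \<Rightarrow> (nat \<Rightarrow> 'n \<Rightarrow> 'y \<Rightarrow> real) \<Rightarrow> real \<Rightarrow> 'n \<Rightarrow> 'y \<Rightarrow> bool" where
  "is_barrier_min k g h t x y \<longleftrightarrow> y \<in> sfeas k h x \<and>
     (\<forall>z\<in>sfeas k h x. gbar k g h t x y \<le> gbar k g h t x z)"

definition is_KKT_mult :: "nat \<Rightarrow> ('n \<Rightarrow> real^'m \<Rightarrow> real) \<Rightarrow> (nat \<Rightarrow> 'n \<Rightarrow> real^'m \<Rightarrow> real) \<Rightarrow> 'n \<Rightarrow> real^'m \<Rightarrow> (nat \<Rightarrow> real) \<Rightarrow> bool" where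
  "is_KKT_mult k g h x y lam \<longleftrightarrow>
     (\<forall>i\<in>{1..k}. lam i \<ge> 0 \<and> lam i * h i x y = 0) \<and>
     grad_y g x y + (\<Sum>i=1..k. lam i *\<^sub>R grad_y (h i) x y) = 0"

definition affine_fun :: "(real^'m \<Rightarrow> real) \<Rightarrow> bool" where
  "affine_fun F \<longleftrightarrow> (\<exists>c d. \<forall>y. F y = c \<bullet> y + d)"

end

theory Submission
  imports Defs
begin
lemma in_span_image:
  fixes f :: "nat \<Rightarrow> 'a::real_vector"
  assumes "finite B" "z \<in> span (f ` B)"
  shows "\<exists>u. z = (\<Sum>i\<in>B. u i *\<^sub>R f i)"
  using assms(2)
proof (induction rule: span_induct_alt)
  case base
  then show ?case by (rule exI[of _ "\<lambda>_. 0"]) simp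
next
  case (step c x y)
  then obtain i0 u where i0: "i0 \<in> B" "x = f i0" and u: "y = (\<Sum>i\<in>B. u i *\<^sub>R f i)" by auto
  have "c *\<^sub>R x + y = (\<Sum>i\<in>B. (u i + (if i = i0 then c else 0)) *\<^sub>R f i)"
  proof -
    have "(\<Sum>i\<in>B. (if i = i0 then c else 0) *\<^sub>R f i) = (\<Sum>i\<in>B. if i = i0 then c *\<^sub>R f i else 0)"
      by (rule sum.cong) auto
    also have "\<dots> = c *\<^sub>R x" using i0 assms(1) by simp
    finally show ?thesis using u by (simp add: scaleR_add_left sum.distrib)
  qed
  then show ?case by (intro exI[where x="\<lambda>i. u i + (if i = i0 then c else 0)"])
qed

lemma grad_affine:
  fixes F :: "'n \<Rightarrow> real^'m \<Rightarrow> real"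
  assumes "\<forall>y. F x y = c \<bullet> y + d"
  shows "grad_y F x y = c"
proof -
  have e: "F x = (\<lambda>y. c \<bullet> y + d)" using assms by auto
  have "((\<lambda>y. c \<bullet> y + d) has_derivative (\<lambda>v. c \<bullet> v)) (at y)"
    by (auto intro!: derivative_eq_intros)
  then have "frechet_derivative (F x) (at y) = (\<lambda>v. c \<bullet> v)"
    using e frechet_derivative_at by metis
  then show ?thesis unfolding grad_y_def by (simp add: vec_eq_iff inner_axis)
qed

lemma stat:
  fixes c y :: "real^'m" and a :: "nat \<Rightarrow> real^'m" and b :: "nat \<Rightarrow> real" and t :: real
  assumes feas: "\<forall>i\<in>{1..k}. a i \<bullet> y + b i < 0" and t: "t > 0"
  and min: "\<forall>z. (\<forall>i\<in>{1..k}. a i \<bullet> z + b i < 0) \<longrightarrow>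
      c \<bullet> y - t * (\<Sum>i=1..k. ln (-(a i \<bullet> y + b i))) \<le> c \<bullet> z - t * (\<Sum>i=1..k. ln (-(a i \<bullet> z + b i)))"
  shows "c + (\<Sum>i=1..k. (t / (-(a i \<bullet> y + b i))) *\<^sub>R a i) = 0"
proof -
  define v where "v = c + (\<Sum>i=1..k. (t / (-(a i \<bullet> y + b i))) *\<^sub>R a i)"
  define \<phi> where "\<phi> s = c \<bullet> y + s * (c \<bullet> v) - t * (\<Sum>i=1..k. ln (-(a i \<bullet> y + b i) - s * (a i \<bullet> v)))" for s
  have phieq: "\<phi> s = c \<bullet> (y + s *\<^sub>R v) - t * (\<Sum>i=1..k. ln (-(a i \<bullet> (y + s *\<^sub>R v) + b i)))" for s
    unfolding \<phi>_def by (simp add: inner_add_right algebra_simps)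
  have D: "DERIV \<phi> 0 :> c \<bullet> v - t * (\<Sum>i=1..k. (- (a i \<bullet> v)) / (-(a i \<bullet> y + b i)))"
    unfolding \<phi>_def
    using feas
    by (auto intro!: derivative_eq_intros DERIV_sum simp: field_simps)
  have vv: "c \<bullet> v - t * (\<Sum>i=1..k. (- (a i \<bullet> v)) / (-(a i \<bullet> y + b i))) = v \<bullet> v"
  proof -
    have "v \<bullet> v = c \<bullet> v + (\<Sum>i=1..k. (t / (-(a i \<bullet> y + b i))) * (a i \<bullet> v))"
      by (subst (2) v_def) (simp add: inner_add_right inner_sum_right inner_commute)
    also have "\<dots> = c \<bullet> v - t * (\<Sum>i=1..k. (- (a i \<bullet> v)) / (-(a i \<bullet> y + b i)))"
      by (simp add: sum_distrib_left sum_negf field_simps)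
    finally show ?thesis by simp
  qed
  have ev: "eventually (\<lambda>s. \<forall>i\<in>{1..k}. -(a i \<bullet> y + b i) - s * (a i \<bullet> v) > 0) (nhds 0)"
  proof (rule eventually_ball_finite)
    show "finite {1..k}" by simp
    show "\<forall>i\<in>{1..k}. eventually (\<lambda>s. -(a i \<bullet> y + b i) - s * (a i \<bullet> v) > 0) (nhds 0)"
    proof
      fix i assume i: "i \<in> {1..k}"
      have "((\<lambda>s. -(a i \<bullet> y + b i) - s * (a i \<bullet> v)) \<longlongrightarrow> -(a i \<bullet> y + b i) - 0 * (a i \<bullet> v)) (nhds 0)"
        by (intro tendsto_intros) (simp add: filterlim_ident)
      then show "eventually (\<lambda>s. -(a i \<bullet> y + b i) - s * (a i \<bullet> v) > 0) (nhds 0)"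
        using feas i by (intro order_tendstoD) force+
    qed
  qed
  then obtain d where d: "d > 0" "\<And>s. dist s 0 < d \<Longrightarrow> \<forall>i\<in>{1..k}. -(a i \<bullet> y + b i) - s * (a i \<bullet> v) > 0"
    unfolding eventually_nhds_metric by blast
  have "\<forall>s. \<bar>0 - s\<bar> < d \<longrightarrow> \<phi> 0 \<le> \<phi> s"
  proof (intro allI impI)
    fix s :: real assume "\<bar>0 - s\<bar> < d"
    then have "\<forall>i\<in>{1..k}. -(a i \<bullet> y + b i) - s * (a i \<bullet> v) > 0" using d by (auto simp: dist_real_def)
    then have "\<forall>i\<in>{1..k}. a i \<bullet> (y + s *\<^sub>R v) + b i < 0" by (auto simp: inner_add_right algebra_simps)
    then show "\<phi> 0 \<le> \<phi> s" using min unfolding phieq by simp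
  qed
  from DERIV_local_min[OF D d(1) this] vv have "v \<bullet> v = 0" by simp
  then show ?thesis unfolding v_def by simp
qed

theorem lemma13:
  fixes f g :: "real^'n \<Rightarrow> real^'m \<Rightarrow> real"
    and h :: "nat \<Rightarrow> real^'n \<Rightarrow> real^'m \<Rightarrow> real"
    and k :: nat and X :: "(real^'n) set" and x :: "real^'n"
    and ys :: "real^'m" and yt :: "real \<Rightarrow> real^'m" and lam :: "nat \<Rightarrow> real"
  assumes A1: "C1_fun (\<lambda>z. f (fst z) (snd z))" "C2_fun (\<lambda>z. g (fst z) (snd z))"
              "\<forall>i\<in>{1..k}. C2_fun (\<lambda>z. h i (fst z) (snd z))"
    and A2: "convex X" "compact X" "\<forall>x'\<in>X. \<exists>y. \<forall>i\<in>{1..k}. h i x' y < 0"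
    and A3: "\<forall>x'\<in>X. \<forall>y\<in>ystar k g h x'.
               (\<forall>c::nat \<Rightarrow> real.
                  (\<Sum>i\<in>{i\<in>{1..k}. h i x' y = 0}. c i *\<^sub>R grad_y (h i) x' y) = 0
                  \<longrightarrow> (\<forall>i\<in>{i\<in>{1..k}. h i x' y = 0}. c i = 0))"
    and LIN: "\<forall>x'\<in>X. affine_fun (g x') \<and> (\<forall>i\<in>{1..k}. affine_fun (h i x'))
                     \<and> compact (feas k h x')"
    and hx: "x \<in> X"
    and single: "ystar k g h x = {ys}"
    and ytmin: "\<forall>t>0. is_barrier_min k g h t x (yt t)"
    and KKT: "is_KKT_mult k g h x ys lam"
  shows "\<forall>i\<in>{1..k}. ((\<lambda>t. t / (- h i x (yt t))) \<longlongrightarrow> lam i) (at_right 0)"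
proof -
  obtain c d where gx: "\<forall>y. g x y = c \<bullet> y + d"
    using LIN hx unfolding affine_fun_def by blast
  have "\<forall>i\<in>{1..k}. \<exists>p. \<forall>y. h i x y = fst p \<bullet> y + snd p"
    using LIN hx unfolding affine_fun_def by force
  then obtain F where F: "\<forall>i\<in>{1..k}. \<forall>y. h i x y = fst (F i) \<bullet> y + snd (F i)"
    by (metis bchoice)
  define a where "a i = fst (F i)" for i
  define b where "b i = snd (F i)" for i
  have hab: "\<And>i y. i \<in> {1..k} \<Longrightarrow> h i x y = a i \<bullet> y + b i"
    using F a_def b_def by auto
  have gc: "\<And>y. grad_y g x y = c" using gx by (rule grad_affine)
  have ga: "\<And>i y. i \<in> {1..k} \<Longrightarrow> grad_y (h i) x y = a i"
    using hab by (intro grad_affine) auto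
  have ysS: "ys \<in> ystar k g h x" using single by auto
  then have ysF: "\<forall>i\<in>{1..k}. h i x ys \<le> 0" and ysmin: "\<And>z. z \<in> feas k h x \<Longrightarrow> g x ys \<le> g x z"
    unfolding ystar_def feas_def by auto
  have lam0: "\<And>i. i \<in> {1..k} \<Longrightarrow> lam i \<ge> 0 \<and> lam i * h i x ys = 0"
    using KKT unfolding is_KKT_mult_def by auto
  have kkt: "c + (\<Sum>i=1..k. lam i *\<^sub>R a i) = 0"
  proof -
    have "(\<Sum>i=1..k. lam i *\<^sub>R grad_y (h i) x ys) = (\<Sum>i=1..k. lam i *\<^sub>R a i)"
      by (rule sum.cong) (auto simp: ga)
    then show ?thesis using KKT gc unfolding is_KKT_mult_def by simp
  qed
  define A where "A = {i\<in>{1..k}. h i x ys = 0}"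
  define I where "I = {i\<in>{1..k}. h i x ys \<noteq> 0}"
  have licq: "\<And>cc. (\<Sum>i\<in>A. cc i *\<^sub>R a i) = 0 \<Longrightarrow> \<forall>i\<in>A. cc i = 0"
  proof -
    fix cc assume "(\<Sum>i\<in>A. cc i *\<^sub>R a i) = 0"
    moreover have "(\<Sum>i\<in>A. cc i *\<^sub>R grad_y (h i) x ys) = (\<Sum>i\<in>A. cc i *\<^sub>R a i)"
      by (rule sum.cong) (auto simp: ga A_def)
    ultimately show "\<forall>i\<in>A. cc i = 0" using A3 hx ysS unfolding A_def by auto
  qed
  define mu where "mu t i = t / (- h i x (yt t))" for t i
  have ytS: "\<And>t. t > 0 \<Longrightarrow> \<forall>i\<in>{1..k}. h i x (yt t) < 0"
    using ytmin unfolding is_barrier_min_def sfeas_def by auto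
  have stat': "c + (\<Sum>i=1..k. mu t i *\<^sub>R a i) = 0" if t: "t > 0" for t
  proof -
    have lnsum: "\<And>z. (\<Sum>i=1..k. ln (- h i x z)) = (\<Sum>i=1..k. ln (-(a i \<bullet> z + b i)))"
      by (rule sum.cong) (auto simp: hab)
    have mueq: "(\<Sum>i=1..k. mu t i *\<^sub>R a i) = (\<Sum>i=1..k. (t / (-(a i \<bullet> yt t + b i))) *\<^sub>R a i)"
      by (rule sum.cong) (auto simp: hab mu_def)
    have "c + (\<Sum>i=1..k. (t / (-(a i \<bullet> yt t + b i))) *\<^sub>R a i) = 0"
    proof (rule stat[OF _ t])
      show "\<forall>i\<in>{1..k}. a i \<bullet> yt t + b i < 0" using ytS[OF t] hab by auto
      show "\<forall>z. (\<forall>i\<in>{1..k}. a i \<bullet> z + b i < 0) \<longrightarrow>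
        c \<bullet> yt t - t * (\<Sum>i = 1..k. ln (- (a i \<bullet> yt t + b i)))
        \<le> c \<bullet> z - t * (\<Sum>i = 1..k. ln (- (a i \<bullet> z + b i)))"
      proof (intro allI impI)
        fix z assume "\<forall>i\<in>{1..k}. a i \<bullet> z + b i < 0"
        then have "z \<in> sfeas k h x" unfolding sfeas_def using hab by auto
        then have "gbar k g h t x (yt t) \<le> gbar k g h t x z"
          using ytmin t unfolding is_barrier_min_def by auto
        then show "c \<bullet> yt t - t * (\<Sum>i = 1..k. ln (- (a i \<bullet> yt t + b i)))
          \<le> c \<bullet> z - t * (\<Sum>i = 1..k. ln (- (a i \<bullet> z + b i)))"
          unfolding gbar_def lnsum by (simp add: gx)
      qed
    qed
    then show ?thesis using mueq by simp
  qed
  have key: "(\<Sum>i=1..k. mu t i * (- h i x ys)) \<le> real k * t" if t: "t > 0" for t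
  proof -
    let ?y = "yt t"
    have "?y \<in> feas k h x" using ytS[OF t] unfolding feas_def by auto
    then have "c \<bullet> ys \<le> c \<bullet> ?y" using ysmin gx by force
    then have 0: "0 \<le> c \<bullet> (?y - ys)" by (simp add: inner_diff_right)
    have "c = - (\<Sum>i=1..k. mu t i *\<^sub>R a i)" using stat'[OF t] by (simp add: eq_neg_iff_add_eq_0)
    then have "c \<bullet> (?y - ys) = - (\<Sum>i=1..k. mu t i * (a i \<bullet> (?y - ys)))"
      by (simp add: inner_sum_left)
    also have "\<dots> = - (\<Sum>i=1..k. (- t) + mu t i * (- h i x ys))"
    proof -
      have "(\<Sum>i=1..k. mu t i * (a i \<bullet> (?y - ys))) = (\<Sum>i=1..k. (- t) + mu t i * (- h i x ys))"
      proof (rule sum.cong)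
        fix i assume i: "i \<in> {1..k}"
        have "h i x ?y < 0" using ytS[OF t] i by auto
        then show "mu t i * (a i \<bullet> (?y - ys)) = (- t) + mu t i * (- h i x ys)"
          using hab[OF i, of ?y] hab[OF i, of ys] unfolding mu_def
          by (simp add: inner_diff_right field_simps)
      qed simp
      then show ?thesis by simp
    qed
    also have "\<dots> = real k * t - (\<Sum>i=1..k. mu t i * (- h i x ys))"
      by (simp only: sum.distrib sum_constant card_atLeastAtMost) simp
    finally show ?thesis using 0 by simp
  qed
  have mupos: "mu t i > 0" if "t > 0" "i \<in> {1..k}" for t i
    using ytS[OF that(1)] that unfolding mu_def by (auto simp: divide_pos_neg)
  have inact: "((\<lambda>t. mu t i) \<longlongrightarrow> 0) (at_right 0)" if i: "i \<in> I" for i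
  proof (rule tendsto_sandwich[where f="\<lambda>_. 0" and h="\<lambda>t. real k * t / (- h i x ys)"])
    have i1: "i \<in> {1..k}" and hneg: "h i x ys < 0" using i ysF unfolding I_def by force+
    show "\<forall>\<^sub>F t in at_right 0. 0 \<le> mu t i"
      using eventually_at_right_less[of "0::real"] by eventually_elim (use mupos i1 in force)
    show "\<forall>\<^sub>F t in at_right 0. mu t i \<le> real k * t / (- h i x ys)"
      using eventually_at_right_less[of "0::real"]
    proof eventually_elim
      case (elim t)
      have "mu t i * (- h i x ys) \<le> (\<Sum>j=1..k. mu t j * (- h j x ys))"
      proof (rule member_le_sum)
        fix x' assume x': "x' \<in> {1..k} - {i}"
        have "0 \<le> mu t x'" using mupos[OF elim, of x'] x' by simp
        moreover have "0 \<le> - h x' x ys" using ysF x' by auto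
        ultimately show "0 \<le> mu t x' * (- h x' x ys)" by (rule mult_nonneg_nonneg)
      qed (use i1 in simp_all)
      also have "\<dots> \<le> real k * t" by (rule key[OF elim])
      finally show ?case using hneg by (simp add: field_simps)
    qed
    show "((\<lambda>_. 0) \<longlongrightarrow> (0::real)) (at_right 0)" by simp
    have "((\<lambda>t. real k * t / (- h i x ys)) \<longlongrightarrow> real k * 0 / (- h i x ys)) (at_right 0)"
      using hneg by (intro tendsto_intros) (auto simp: tendsto_ident_at)
    then show "((\<lambda>t. real k * t / (- h i x ys)) \<longlongrightarrow> 0) (at_right 0)" by simp
  qed
  have act: "((\<lambda>t. mu t j) \<longlongrightarrow> lam j) (at_right 0)" if j: "j \<in> A" for j
  proof -
    have j1: "j \<in> {1..k}" using j A_def by auto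
    obtain yy w where yy: "yy \<in> span (a ` (A - {j}))"
      and w: "\<And>v. v \<in> span (a ` (A - {j})) \<Longrightarrow> orthogonal w v" and dec: "a j = yy + w"
      by (rule orthogonal_subspace_decomp_exists[of "a ` (A - {j})" "a j"]) blast+
    have wperp: "a i \<bullet> w = 0" if "i \<in> A - {j}" for i
    proof -
      have "orthogonal w (a i)" using that by (intro w span_base) auto
      then show ?thesis by (simp add: orthogonal_def inner_commute)
    qed
    have ajw: "a j \<bullet> w = w \<bullet> w"
      using w[OF yy] dec by (simp add: inner_add_left inner_add_right orthogonal_def inner_commute)
    have wnz: "w \<noteq> 0"
    proof
      assume "w = 0"
      then have "a j \<in> span (a ` (A - {j}))" using dec yy by simp
      then obtain u where u: "a j = (\<Sum>i\<in>A - {j}. u i *\<^sub>R a i)"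
        using in_span_image[of "A - {j}"] unfolding A_def by auto
      define cc where "cc i = (if i = j then -1 else u i)" for i
      have fA: "finite A" unfolding A_def by simp
      have "(\<Sum>i\<in>A. cc i *\<^sub>R a i) = cc j *\<^sub>R a j + (\<Sum>i\<in>A - {j}. cc i *\<^sub>R a i)"
        using fA j by (simp add: sum.remove)
      also have "(\<Sum>i\<in>A - {j}. cc i *\<^sub>R a i) = (\<Sum>i\<in>A - {j}. u i *\<^sub>R a i)"
        by (rule sum.cong) (auto simp: cc_def)
      finally have "(\<Sum>i\<in>A. cc i *\<^sub>R a i) = 0" using u by (simp add: cc_def)
      then have "cc j = 0" using licq j by blast
      then show False by (simp add: cc_def)
    qed
    then have ajw0: "a j \<bullet> w \<noteq> 0" using ajw by simp
    have fin: "finite {1..k}" by simp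
    have ident: "mu t j = lam j - (\<Sum>i\<in>I. mu t i * (a i \<bullet> w)) / (a j \<bullet> w)" if t: "t > 0" for t
    proof -
      have s1: "c \<bullet> w + (\<Sum>i=1..k. mu t i * (a i \<bullet> w)) = 0"
        using arg_cong[OF stat'[OF t], of "\<lambda>v. v \<bullet> w"] by (simp add: inner_add_left inner_sum_left)
      have s2: "c \<bullet> w + (\<Sum>i=1..k. lam i * (a i \<bullet> w)) = 0"
        using arg_cong[OF kkt, of "\<lambda>v. v \<bullet> w"] by (simp add: inner_add_left inner_sum_left)
      have e1: "(\<Sum>i=1..k. mu t i * (a i \<bullet> w)) =
          (\<Sum>i=1..k. (if i = j then mu t j * (a j \<bullet> w) else 0) + (if h i x ys \<noteq> 0 then mu t i * (a i \<bullet> w) else 0))"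
      proof (rule sum.cong)
        fix i assume i: "i \<in> {1..k}"
        show "mu t i * (a i \<bullet> w) = (if i = j then mu t j * (a j \<bullet> w) else 0) + (if h i x ys \<noteq> 0 then mu t i * (a i \<bullet> w) else 0)"
          using wperp[of i] i j unfolding A_def by auto
      qed simp
      also have "\<dots> = mu t j * (a j \<bullet> w) + (\<Sum>i\<in>I. mu t i * (a i \<bullet> w))"
      proof -
        have "(\<Sum>i=1..k. if h i x ys \<noteq> 0 then mu t i * (a i \<bullet> w) else 0) = (\<Sum>i\<in>I. mu t i * (a i \<bullet> w))"
          unfolding I_def by (rule sum.inter_filter[OF fin, symmetric])
        then show ?thesis using j1 by (simp only: sum.distrib) simp
      qed
      finally have e1': "(\<Sum>i=1..k. mu t i * (a i \<bullet> w)) = mu t j * (a j \<bullet> w) + (\<Sum>i\<in>I. mu t i * (a i \<bullet> w))" .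
      have e2: "(\<Sum>i=1..k. lam i * (a i \<bullet> w)) = (\<Sum>i=1..k. if i = j then lam j * (a j \<bullet> w) else 0)"
      proof (rule sum.cong)
        fix i assume i: "i \<in> {1..k}"
        show "lam i * (a i \<bullet> w) = (if i = j then lam j * (a j \<bullet> w) else 0)"
          using wperp[of i] i j lam0[OF i] unfolding A_def by auto
      qed simp
      have "mu t j * (a j \<bullet> w) + (\<Sum>i\<in>I. mu t i * (a i \<bullet> w)) = lam j * (a j \<bullet> w)"
        using s1 s2 e1' e2 j1 by simp
      then show ?thesis using ajw0 by (simp add: field_simps)
    qed
    have "((\<lambda>t. lam j - (\<Sum>i\<in>I. mu t i * (a i \<bullet> w)) / (a j \<bullet> w)) \<longlongrightarrow>
           lam j - (\<Sum>i\<in>I. 0 * (a i \<bullet> w)) / (a j \<bullet> w)) (at_right 0)"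
      using ajw0 by (intro tendsto_intros inact) auto
    then have "((\<lambda>t. lam j - (\<Sum>i\<in>I. mu t i * (a i \<bullet> w)) / (a j \<bullet> w)) \<longlongrightarrow> lam j) (at_right 0)"
      by simp
    then show ?thesis
      by (rule Lim_transform_eventually)
         (use eventually_at_right_less[of "0::real"] in \<open>eventually_elim, simp add: ident\<close>)
  qed
  show ?thesis
  proof
    fix i assume i: "i \<in> {1..k}"
    show "((\<lambda>t. t / (- h i x (yt t))) \<longlongrightarrow> lam i) (at_right 0)"
    proof (cases "h i x ys = 0")
      case True
      then show ?thesis using act[of i] i unfolding A_def mu_def by auto
    next
      case False
      then have "lam i = 0" using lam0[OF i] by auto
      then show ?thesis using inact[of i] i False unfolding I_def mu_def by auto
    qed
  qed
qed

end
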